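(* The join $\mathsf V(M_2)\vee\mathbf N$ is the unique maximal (proper) subvariety of $\mathsf V(S_7)$: it is a proper subvariety, and every proper subvariety of $\mathsf V(S_7)$ is contained in it.
   Context: $S_7$ is the ai-semiring on $\{\infty,a,1\}$ with $x+x=x$, $x+y=\infty$ for $x\neq y$, and commutative multiplication with $\infty$ a zero, $a\cdot a=\infty$, $a\cdot 1=a$, $1\cdot1=1$; $\mathsf V(S_7)$ is the variety it generates. $M_2$ is the two-element ai-semiring $\{1,\infty\}$ with $1+\infty=\infty$, $x+x=x$, $1\cdot1=1$ and $\infty$ a multiplicative zero. $\mathbf N$ is the subvariety of $\mathsf V(S_7)$ defined by $x^2y\approx x^2$. $\mathcal V_1\vee\mathcal V_2$ denotes the smallest variety containing both. *)

theory Defs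
  imports Main
begin

datatype trm = V nat | Plus trm trm | Times trm trm

type_synonym identity = "trm \<times> trm"

fun eval :: "('a \<Rightarrow> 'a \<Rightarrow> 'a) \<Rightarrow> ('a \<Rightarrow> 'a \<Rightarrow> 'a) \<Rightarrow> (nat \<Rightarrow> 'a) \<Rightarrow> trm \<Rightarrow> 'a" where
  "eval ad mu \<sigma> (V n) = \<sigma> n"
| "eval ad mu \<sigma> (Plus s t) = ad (eval ad mu \<sigma> s) (eval ad mu \<sigma> t)"
| "eval ad mu \<sigma> (Times s t) = mu (eval ad mu \<sigma> s) (eval ad mu \<sigma> t)"

fun subst :: "(nat \<Rightarrow> trm) \<Rightarrow> trm \<Rightarrow> trm" where
  "subst \<tau> (V n) = \<tau> n"
| "subst \<tau> (Plus s t) = Plus (subst \<tau> s) (subst \<tau> t)"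
| "subst \<tau> (Times s t) = Times (subst \<tau> s) (subst \<tau> t)"

definition Id_alg :: "('a \<Rightarrow> 'a \<Rightarrow> 'a) \<Rightarrow> ('a \<Rightarrow> 'a \<Rightarrow> 'a) \<Rightarrow> identity set" where
  "Id_alg ad mu = {(s, t). \<forall>\<sigma>. eval ad mu \<sigma> s = eval ad mu \<sigma> t}"

text \<open>By Birkhoff's
  theorem, subvarieties of a variety V correspond (order-reversingly) to the
  equational theories containing Id(V).\<close>
definition eq_theory :: "identity set \<Rightarrow> bool" where
  "eq_theory T \<longleftrightarrow>
     (\<forall>t. (t, t) \<in> T) \<and>
     (\<forall>s t. (s, t) \<in> T \<longrightarrow> (t, s) \<in> T) \<and>
     (\<forall>s t u. (s, t) \<in> T \<longrightarrow> (t, u) \<in> T \<longrightarrow> (s, u) \<in> T) \<and>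
     (\<forall>s t s' t'. (s, t) \<in> T \<longrightarrow> (s', t') \<in> T \<longrightarrow>
        (Plus s s', Plus t t') \<in> T \<and> (Times s s', Times t t') \<in> T) \<and>
     (\<forall>s t \<tau>. (s, t) \<in> T \<longrightarrow> (subst \<tau> s, subst \<tau> t) \<in> T)"

text \<open>The equational theory generated by a set of identities
  (= Id of the variety defined by these identities).\<close>
definition eq_closure :: "identity set \<Rightarrow> identity set" where
  "eq_closure E = \<Inter>{T. eq_theory T \<and> E \<subseteq> T}"

datatype s7 = Inf7 | A7 | One7

fun add7 :: "s7 \<Rightarrow> s7 \<Rightarrow> s7" where
  "add7 x y = (if x = y then x else Inf7)"

fun mul7 :: "s7 \<Rightarrow> s7 \<Rightarrow> s7" where
  "mul7 Inf7 y = Inf7"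
| "mul7 x Inf7 = Inf7"
| "mul7 A7 A7 = Inf7"
| "mul7 A7 One7 = A7"
| "mul7 One7 A7 = A7"
| "mul7 One7 One7 = One7"

datatype m2 = One2 | Inf2

fun add2 :: "m2 \<Rightarrow> m2 \<Rightarrow> m2" where
  "add2 One2 One2 = One2"
| "add2 _ _ = Inf2"

fun mul2 :: "m2 \<Rightarrow> m2 \<Rightarrow> m2" where
  "mul2 One2 One2 = One2"
| "mul2 _ _ = Inf2"

text \<open>Id(V(S_7)) = Id(S_7), Id(V(M_2)) = Id(M_2).\<close>
definition Th_S7 :: "identity set" where "Th_S7 = Id_alg add7 mul7"
definition Th_M2 :: "identity set" where "Th_M2 = Id_alg add2 mul2"

definition Th_N :: "identity set" where
  "Th_N = eq_closure (Th_S7 \<union> {(Times (Times (V 0) (V 0)) (V 1), Times (V 0) (V 0))})"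

text \<open>Id(V_1 \<or> V_2) = Id(V_1) \<inter> Id(V_2).\<close>
definition Th_join :: "identity set" where "Th_join = Th_M2 \<inter> Th_N"

end

theory Submission
  imports Defs
begin

fun vs :: "trm \<Rightarrow> nat set" where
  "vs (V n) = {n}"
| "vs (Plus s t) = vs s \<union> vs t"
| "vs (Times s t) = vs s \<union> vs t"

lemma finite_vs: "finite (vs t)"
  by (induction t) auto

lemma eval_cong: "(\<forall>n\<in>vs t. \<sigma> n = \<sigma>' n) \<Longrightarrow> eval ad mu \<sigma> t = eval ad mu \<sigma>' t"
  by (induction t) auto

lemma eval_subst: "eval ad mu \<sigma> (subst \<tau> t) = eval ad mu (\<lambda>n. eval ad mu \<sigma> (\<tau> n)) t"
  by (induction t) auto

lemma Id_alg_iff: "(s, t) \<in> Id_alg ad mu \<longleftrightarrow> (\<forall>\<sigma>. eval ad mu \<sigma> s = eval ad mu \<sigma> t)"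
  unfolding Id_alg_def by auto

lemma eq_theory_Id_alg: "eq_theory (Id_alg ad mu)"
  unfolding eq_theory_def Id_alg_iff by (auto simp: eval_subst)

lemma eq_theory_Inter: "(\<And>T. T \<in> F \<Longrightarrow> eq_theory T) \<Longrightarrow> eq_theory (\<Inter>F)"
  unfolding eq_theory_def Inter_iff
  by (intro conjI allI impI ballI; metis)

lemma eq_theory_Int: "eq_theory A \<Longrightarrow> eq_theory B \<Longrightarrow> eq_theory (A \<inter> B)"
  unfolding eq_theory_def Int_iff
  by (intro conjI allI impI; elim conjE; metis)

lemma eq_theory_closure: "eq_theory (eq_closure E)"
  unfolding eq_closure_def by (rule eq_theory_Inter) auto

lemma closure_sub: "E \<subseteq> eq_closure E"
  unfolding eq_closure_def by auto

lemma closure_least: "eq_theory T \<Longrightarrow> E \<subseteq> T \<Longrightarrow> eq_closure E \<subseteq> T"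
  unfolding eq_closure_def by auto

lemma add7_one: "add7 x y = One7 \<longleftrightarrow> x = One7 \<and> y = One7"
  by (auto simp: add7.simps)
lemma mul7_one: "mul7 x y = One7 \<longleftrightarrow> x = One7 \<and> y = One7"
  by (cases x; cases y) auto
lemma mul7_inf[simp]: "mul7 x Inf7 = Inf7" "mul7 Inf7 x = Inf7"
  by (cases x; simp)+
lemma add7_inf[simp]: "add7 x Inf7 = Inf7" "add7 Inf7 x = Inf7"
  by (auto simp: add7.simps)
lemma add7_same[simp]: "add7 x x = x" by simp
lemma add7_diff[simp]: "x \<noteq> y \<Longrightarrow> add7 x y = Inf7" by simp
declare add7.simps[simp del]

lemma mul7_one1[simp]: "mul7 One7 x = x" "mul7 x One7 = x"
  by (cases x; simp)+

lemma e7_one: "eval add7 mul7 \<sigma> t = One7 \<longleftrightarrow> (\<forall>n\<in>vs t. \<sigma> n = One7)"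
proof (induction t)
  case (Plus s t) then show ?case by (simp only: eval.simps add7_one vs.simps) blast
next
  case (Times s t) then show ?case by (simp only: eval.simps mul7_one vs.simps) blast
qed simp

lemma e7_inf: "n \<in> vs t \<Longrightarrow> \<sigma> n = Inf7 \<Longrightarrow> eval add7 mul7 \<sigma> t = Inf7"
  by (induction t) auto

lemma add2_inf: "add2 x y = Inf2 \<longleftrightarrow> x = Inf2 \<or> y = Inf2"
  by (cases x; cases y) auto
lemma mul2_inf: "mul2 x y = Inf2 \<longleftrightarrow> x = Inf2 \<or> y = Inf2"
  by (cases x; cases y) auto

lemma e2_inf: "eval add2 mul2 \<sigma> t = Inf2 \<longleftrightarrow> (\<exists>n\<in>vs t. \<sigma> n = Inf2)"
  by (induction t) (auto simp: add2_inf mul2_inf)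

lemma M2_vs: "(P, Q) \<in> Th_M2 \<Longrightarrow> vs P = vs Q"
proof (rule ccontr)
  assume a: "(P, Q) \<in> Th_M2" "vs P \<noteq> vs Q"
  have ev: "\<And>\<sigma>. eval add2 mul2 \<sigma> P = eval add2 mul2 \<sigma> Q"
    using a(1) unfolding Th_M2_def Id_alg_iff by auto
  { fix z assume z: "z \<in> vs P" "z \<notin> vs Q"
    let ?\<sigma> = "\<lambda>v. if v = z then Inf2 else One2"
    have "eval add2 mul2 ?\<sigma> P = Inf2" using z by (auto simp: e2_inf)
    moreover have "eval add2 mul2 ?\<sigma> Q \<noteq> Inf2" using z by (auto simp: e2_inf)
    ultimately have False using ev[of ?\<sigma>] by simp }
  moreover
  { fix z assume z: "z \<in> vs Q" "z \<notin> vs P"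
    let ?\<sigma> = "\<lambda>v. if v = z then Inf2 else One2"
    have "eval add2 mul2 ?\<sigma> Q = Inf2" using z by (auto simp: e2_inf)
    moreover have "eval add2 mul2 ?\<sigma> P \<noteq> Inf2" using z by (auto simp: e2_inf)
    ultimately have False using ev[of ?\<sigma>] by simp }
  ultimately show False using a(2) by blast
qed

fun emb :: "m2 \<Rightarrow> s7" where "emb One2 = One7" | "emb Inf2 = Inf7"

lemma emb_add: "add7 (emb x) (emb y) = emb (add2 x y)"
  by (cases x; cases y) simp_all
lemma emb_mul: "mul7 (emb x) (emb y) = emb (mul2 x y)"
  by (cases x; cases y) simp_all

lemma emb_eval: "eval add7 mul7 (emb \<circ> \<sigma>) t = emb (eval add2 mul2 \<sigma> t)"
  by (induction t) (simp_all only: eval.simps emb_add emb_mul comp_apply)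

lemma emb_inj: "emb x = emb y \<Longrightarrow> x = y"
  by (cases x; cases y) auto

lemma S7_sub_M2: "Th_S7 \<subseteq> Th_M2"
  unfolding Th_S7_def Th_M2_def
proof clarify
  fix s t assume "(s, t) \<in> Id_alg add7 mul7"
  then have "\<And>\<sigma>. eval add7 mul7 \<sigma> s = eval add7 mul7 \<sigma> t" by (simp add: Id_alg_iff)
  note ev = this
  show "(s, t) \<in> Id_alg add2 mul2"
    unfolding Id_alg_iff
  proof (intro allI)
    fix \<sigma> :: "nat \<Rightarrow> m2"
    have "emb (eval add2 mul2 \<sigma> s) = emb (eval add2 mul2 \<sigma> t)"
      using ev[of "emb \<circ> \<sigma>"]
      by (simp only: emb_eval)
    then show "eval add2 mul2 \<sigma> s = eval add2 mul2 \<sigma> t" by (rule emb_inj)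
  qed
qed


fun addB :: "nat set option \<Rightarrow> nat set option \<Rightarrow> nat set option" where
  "addB (Some S) (Some T) = (if S = T then Some S else None)"
| "addB _ _ = None"

fun mulB :: "nat set option \<Rightarrow> nat set option \<Rightarrow> nat set option" where
  "mulB (Some S) (Some T) = (if S \<inter> T = {} \<and> S \<noteq> {} \<and> T \<noteq> {} then Some (S \<union> T) else None)"
| "mulB _ _ = None"

definition JB :: "identity set" where
  "JB = {(s, t). \<forall>\<sigma>. (\<forall>n. \<sigma> n \<noteq> Some {}) \<longrightarrow> eval addB mulB \<sigma> s = eval addB mulB \<sigma> t}"

lemma JB_iff: "(s, t) \<in> JB \<longleftrightarrow> (\<forall>\<sigma>. (\<forall>n. \<sigma> n \<noteq> Some {}) \<longrightarrow> eval addB mulB \<sigma> s = eval addB mulB \<sigma> t)"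
  unfolding JB_def by auto

lemma addB_good: "x \<noteq> Some {} \<Longrightarrow> addB x y \<noteq> Some {}"
  by (cases x; cases y) auto

lemma mulB_good: "mulB x y \<noteq> Some {}"
  by (cases x; cases y) auto

lemma evalB_good: "(\<forall>n. \<sigma> n \<noteq> Some {}) \<Longrightarrow> eval addB mulB \<sigma> t \<noteq> Some {}"
  by (induction t) (auto simp: addB_good mulB_good)

lemma eq_theory_JB: "eq_theory JB"
  unfolding eq_theory_def JB_iff
  by (auto simp: eval_subst evalB_good)

lemma mulB_sq: "mulB x x = None"
  by (cases x) auto

definition H :: "(nat \<Rightarrow> s7) \<Rightarrow> nat set option" where
  "H v = (if \<exists>e. v e = Inf7 then None else Some {e. v e = A7})"

lemma s7_cases3: "x \<noteq> Inf7 \<Longrightarrow> x \<noteq> A7 \<Longrightarrow> x = One7"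
  by (cases x) auto

lemma addB_None[simp]: "addB x None = None" "addB None x = None"
  by (cases x; simp)+
lemma mulB_None[simp]: "mulB x None = None" "mulB None x = None"
  by (cases x; simp)+

lemma H_add: "addB (H v) (H w) = H (\<lambda>e. add7 (v e) (w e))"
proof (cases "(\<exists>e. v e = Inf7) \<or> (\<exists>e. w e = Inf7)")
  case True
  then obtain e where e: "v e = Inf7 \<or> w e = Inf7" by auto
  have "add7 (v e) (w e) = Inf7" using e by auto
  then have "\<exists>e. add7 (v e) (w e) = Inf7" by blast
  then have "H (\<lambda>e. add7 (v e) (w e)) = None" by (simp add: H_def)
  moreover have "H v = None \<or> H w = None" using e unfolding H_def by auto
  ultimately show ?thesis by auto
next
  case False
  then have nv: "\<And>e. v e \<noteq> Inf7" and nw: "\<And>e. w e \<noteq> Inf7" by auto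
  have Hv: "H v = Some {e. v e = A7}" using nv by (simp add: H_def)
  have Hw: "H w = Some {e. w e = A7}" using nw by (simp add: H_def)
  show ?thesis
  proof (cases "v = w")
    case True
    then show ?thesis using Hv by simp
  next
    case False
    then obtain e where e: "v e \<noteq> w e" by auto
    then have "add7 (v e) (w e) = Inf7" by simp
    then have "\<exists>e. add7 (v e) (w e) = Inf7" by blast
    then have r: "H (\<lambda>e. add7 (v e) (w e)) = None" by (simp add: H_def)
    have "(v e = A7) \<noteq> (w e = A7)" using e nv[of e] nw[of e] by (cases "v e"; cases "w e") auto
    then have "{e. v e = A7} \<noteq> {e. w e = A7}" by blast
    then show ?thesis unfolding Hv Hw r by simp
  qed
qed

lemma H_mul: "H v \<noteq> Some {} \<Longrightarrow> H w \<noteq> Some {} \<Longrightarrow> mulB (H v) (H w) = H (\<lambda>e. mul7 (v e) (w e))"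
proof (cases "(\<exists>e. v e = Inf7) \<or> (\<exists>e. w e = Inf7)")
  case True
  then obtain e where e: "v e = Inf7 \<or> w e = Inf7" by auto
  have "mul7 (v e) (w e) = Inf7" using e by auto
  then have "\<exists>e. mul7 (v e) (w e) = Inf7" by blast
  then have "H (\<lambda>e. mul7 (v e) (w e)) = None" by (simp add: H_def del: mul7.simps)
  moreover have "H v = None \<or> H w = None" using e unfolding H_def by auto
  ultimately show ?thesis by auto
next
  case False
  assume g: "H v \<noteq> Some {}" "H w \<noteq> Some {}"
  from False have nv: "\<And>e. v e \<noteq> Inf7" and nw: "\<And>e. w e \<noteq> Inf7" by auto
  have Hv: "H v = Some {e. v e = A7}" and Hw: "H w = Some {e. w e = A7}"
    using nv nw unfolding H_def by auto
  show ?thesis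
  proof (cases "\<exists>e. v e = A7 \<and> w e = A7")
    case True
    then obtain e where "v e = A7" "w e = A7" by auto
    then have "mul7 (v e) (w e) = Inf7" by simp
    then show ?thesis using True unfolding Hv Hw by (auto simp: H_def)
  next
    case False
    have m: "\<And>e. mul7 (v e) (w e) \<noteq> Inf7 \<and> (mul7 (v e) (w e) = A7 \<longleftrightarrow> v e = A7 \<or> w e = A7)"
    proof -
      fix e
      show "mul7 (v e) (w e) \<noteq> Inf7 \<and> (mul7 (v e) (w e) = A7 \<longleftrightarrow> v e = A7 \<or> w e = A7)"
        using nv[of e] nw[of e] False by (cases "v e"; cases "w e") auto
    qed
    have "{e. v e = A7} \<noteq> {}" "{e. w e = A7} \<noteq> {}" using g Hv Hw by auto
    moreover have "{e. v e = A7} \<inter> {e. w e = A7} = {}" using False by auto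
    ultimately show ?thesis unfolding Hv Hw using m by (auto simp: H_def)
  qed
qed

lemma evalB_good': "(\<forall>n\<in>vs t. \<sigma> n \<noteq> Some {}) \<Longrightarrow> eval addB mulB \<sigma> t \<noteq> Some {}"
  by (induction t) (auto simp: addB_good mulB_good)

lemma corr:
  assumes "\<forall>n\<in>vs t. \<sigma> n = H (\<lambda>e. \<tau> e n)" "\<forall>n\<in>vs t. \<sigma> n \<noteq> Some {}"
  shows "eval addB mulB \<sigma> t = H (\<lambda>e. eval add7 mul7 (\<tau> e) t)"
  using assms
proof (induction t)
  case (V n) then show ?case by simp
next
  case (Plus s t)
  have a: "eval addB mulB \<sigma> s = H (\<lambda>e. eval add7 mul7 (\<tau> e) s)"
    using Plus.IH(1) Plus.prems by simp
  have b: "eval addB mulB \<sigma> t = H (\<lambda>e. eval add7 mul7 (\<tau> e) t)"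
    using Plus.IH(2) Plus.prems by simp
  show ?case using a b by (simp add: H_add)
next
  case (Times s t)
  have a: "eval addB mulB \<sigma> s = H (\<lambda>e. eval add7 mul7 (\<tau> e) s)"
    using Times.IH(1) Times.prems by simp
  have b: "eval addB mulB \<sigma> t = H (\<lambda>e. eval add7 mul7 (\<tau> e) t)"
    using Times.IH(2) Times.prems by simp
  have ga: "eval addB mulB \<sigma> s \<noteq> Some {}" using Times.prems by (intro evalB_good') simp
  have gb: "eval addB mulB \<sigma> t \<noteq> Some {}" using Times.prems by (intro evalB_good') simp
  show ?case using a b ga gb H_mul by simp
qed

lemma S7_sub_JB: "Th_S7 \<subseteq> JB"
proof clarify
  fix s t assume "(s, t) \<in> Th_S7"
  then have ev: "\<And>\<rho>. eval add7 mul7 \<rho> s = eval add7 mul7 \<rho> t"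
    unfolding Th_S7_def Id_alg_iff by auto
  show "(s, t) \<in> JB" unfolding JB_iff
  proof (intro allI impI)
    fix \<sigma> :: "nat \<Rightarrow> nat set option" assume g: "\<forall>n. \<sigma> n \<noteq> Some {}"
    define \<tau> where "\<tau> e n = (case \<sigma> n of None \<Rightarrow> Inf7 | Some S \<Rightarrow> if e \<in> S then A7 else One7)" for e n
    have h: "\<sigma> n = H (\<lambda>e. \<tau> e n)" for n
      by (cases "\<sigma> n") (auto simp: H_def \<tau>_def)
    have h': "\<forall>n\<in>A. \<sigma> n = H (\<lambda>e. \<tau> e n)" for A using h by blast
    have g': "\<forall>n\<in>A. \<sigma> n \<noteq> Some {}" for A using g by blast
    have "eval addB mulB \<sigma> s = H (\<lambda>e. eval add7 mul7 (\<tau> e) s)" by (rule corr[OF h' g'])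
    also have "\<dots> = H (\<lambda>e. eval add7 mul7 (\<tau> e) t)" using ev by simp
    also have "\<dots> = eval addB mulB \<sigma> t" by (rule corr[OF h' g', symmetric])
    finally show "eval addB mulB \<sigma> s = eval addB mulB \<sigma> t" .
  qed
qed

abbreviation X where "X \<equiv> V 0"
abbreviation Y where "Y \<equiv> V 1"
abbreviation sq where "sq u \<equiv> Times u u"
abbreviation Ax where "Ax \<equiv> (Times (sq X) Y, sq X)"

lemma Ax_JB: "Ax \<in> JB"
  unfolding JB_iff by (simp add: mulB_sq)

lemma N_sub_JB: "Th_N \<subseteq> JB"
  unfolding Th_N_def
  by (rule closure_least) (use eq_theory_JB S7_sub_JB Ax_JB in auto)


definition dead :: "trm \<Rightarrow> bool" where
  "dead P \<longleftrightarrow> (\<exists>x\<in>vs P. \<forall>\<sigma>. \<sigma> x \<noteq> One7 \<longrightarrow> eval add7 mul7 \<sigma> P = Inf7)"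

lemma bridge:
  assumes PQ: "(P, Q) \<in> JB" and vsq: "vs Q = vs P"
    and t1: "\<forall>e. \<forall>n\<in>vs P. \<tau> e n \<noteq> Inf7" and t2: "\<forall>n\<in>vs P. \<exists>e. \<tau> e n = A7"
  shows "H (\<lambda>e. eval add7 mul7 (\<tau> e) P) = H (\<lambda>e. eval add7 mul7 (\<tau> e) Q)"
proof -
  define \<sigma> where "\<sigma> n = (if n \<in> vs P then H (\<lambda>e. \<tau> e n) else None)" for n
  have g: "\<forall>n. \<sigma> n \<noteq> Some {}"
  proof
    fix n show "\<sigma> n \<noteq> Some {}"
    proof (cases "n \<in> vs P")
      case True
      then have "H (\<lambda>e. \<tau> e n) = Some {e. \<tau> e n = A7}" using t1 by (auto simp: H_def)
      moreover obtain e where "\<tau> e n = A7" using t2 True by auto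
      ultimately show ?thesis using True by (auto simp: \<sigma>_def)
    qed (simp add: \<sigma>_def)
  qed
  have "\<forall>n\<in>vs P. \<sigma> n = H (\<lambda>e. \<tau> e n)" by (simp add: \<sigma>_def)
  note c = this
  have c': "\<forall>n\<in>vs Q. \<sigma> n = H (\<lambda>e. \<tau> e n)" using c vsq by simp
  have g': "\<forall>n\<in>A. \<sigma> n \<noteq> Some {}" for A using g by blast
  have "H (\<lambda>e. eval add7 mul7 (\<tau> e) P) = eval addB mulB \<sigma> P" by (rule corr[OF c g', symmetric])
  also have "\<dots> = eval addB mulB \<sigma> Q" using PQ g unfolding JB_iff by blast
  also have "\<dots> = H (\<lambda>e. eval add7 mul7 (\<tau> e) Q)" by (rule corr[OF c' g'])
  finally show ?thesis .
qed

lemma main_N: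
  assumes PQ: "(P, Q) \<in> JB" and vsq: "vs Q = vs P" and nd: "\<not> dead P"
  shows "(P, Q) \<in> Th_S7"
proof -
  from nd have "\<forall>x\<in>vs P. \<exists>\<sigma>. \<sigma> x \<noteq> One7 \<and> eval add7 mul7 \<sigma> P \<noteq> Inf7"
    by (auto simp: dead_def)
  then obtain sg where sg: "\<And>x. x \<in> vs P \<Longrightarrow> sg x x \<noteq> One7 \<and> eval add7 mul7 (sg x) P \<noteq> Inf7"
    by metis
  have sgn: "sg x n \<noteq> Inf7" if "x \<in> vs P" "n \<in> vs P" for x n
    using e7_inf[of n P "sg x"] sg[OF that(1)] that(2) by auto
  have sgx: "sg x x = A7" if "x \<in> vs P" for x
    using sg[OF that] sgn[OF that that] s7_cases3 by blast
  have sgP: "eval add7 mul7 (sg x) P = A7" if "x \<in> vs P" for x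
  proof -
    have "eval add7 mul7 (sg x) P \<noteq> One7" using e7_one[of "sg x" P] sg[OF that] that by auto
    then show ?thesis using sg[OF that] s7_cases3 by blast
  qed
  have one: "eval add7 mul7 (\<lambda>_. One7) t = One7" for t by (simp add: e7_one)
  define \<tau>1 where "\<tau>1 e = (if e \<in> vs P then sg e else (\<lambda>_. One7))" for e
  have "H (\<lambda>e. eval add7 mul7 (\<tau>1 e) P) = H (\<lambda>e. eval add7 mul7 (\<tau>1 e) Q)"
  proof (rule bridge[OF PQ vsq])
    show "\<forall>e. \<forall>n\<in>vs P. \<tau>1 e n \<noteq> Inf7" by (auto simp: \<tau>1_def sgn)
    show "\<forall>n\<in>vs P. \<exists>e. \<tau>1 e n = A7"
    proof
      fix n assume n: "n \<in> vs P"
      then have "\<tau>1 n n = A7" by (simp add: \<tau>1_def sgx)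
      then show "\<exists>e. \<tau>1 e n = A7" by blast
    qed
  qed
  moreover have "(\<lambda>e. eval add7 mul7 (\<tau>1 e) P) = (\<lambda>e. if e \<in> vs P then A7 else One7)"
    by (auto simp: \<tau>1_def sgP one)
  moreover have "H (\<lambda>e. if e \<in> vs P then A7 else One7) = Some (vs P)"
    by (simp add: H_def)
  ultimately have "H (\<lambda>e. eval add7 mul7 (\<tau>1 e) Q) = Some (vs P)"
    by simp
  then have "{e. eval add7 mul7 (\<tau>1 e) Q = A7} = vs P"
    unfolding H_def by (auto split: if_splits)
  then have sgQ: "eval add7 mul7 (sg x) Q = A7" if "x \<in> vs P" for x
  proof -
    assume st: "{e. eval add7 mul7 (\<tau>1 e) Q = A7} = vs P"
    have "x \<in> {e. eval add7 mul7 (\<tau>1 e) Q = A7}" using that st by simp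
    then show ?thesis using that by (simp add: \<tau>1_def)
  qed
  show ?thesis unfolding Th_S7_def Id_alg_iff
  proof
    fix \<rho>
    show "eval add7 mul7 \<rho> P = eval add7 mul7 \<rho> Q"
    proof (cases "\<exists>n\<in>vs P. \<rho> n = Inf7")
      case True
      then obtain n where n: "n \<in> vs P" "\<rho> n = Inf7" by blast
      have "eval add7 mul7 \<rho> P = Inf7" by (rule e7_inf[of n P \<rho>, OF n])
      moreover have "eval add7 mul7 \<rho> Q = Inf7" using n vsq e7_inf[of n Q \<rho>] by simp
      ultimately show ?thesis by simp
    next
      case F1: False
      show ?thesis
      proof (cases "\<forall>n\<in>vs P. \<rho> n = One7")
        case True
        then have "eval add7 mul7 \<rho> P = One7" "eval add7 mul7 \<rho> Q = One7"
          using vsq by (simp_all add: e7_one)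
        then show ?thesis by simp
      next
        case False
        then have pn: "eval add7 mul7 \<rho> P \<noteq> One7" and qn: "eval add7 mul7 \<rho> Q \<noteq> One7"
          using vsq by (auto simp: e7_one)
        obtain e0 where e0: "e0 \<notin> vs P" using finite_vs[of P] ex_new_if_finite infinite_UNIV_nat by blast
        define \<tau>2 where "\<tau>2 e = (if e \<in> vs P then sg e else \<rho>)" for e
        have HH: "H (\<lambda>e. eval add7 mul7 (\<tau>2 e) P) = H (\<lambda>e. eval add7 mul7 (\<tau>2 e) Q)"
        proof (rule bridge[OF PQ vsq])
          show "\<forall>e. \<forall>n\<in>vs P. \<tau>2 e n \<noteq> Inf7" using F1 by (auto simp: \<tau>2_def sgn)
          show "\<forall>n\<in>vs P. \<exists>e. \<tau>2 e n = A7"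
          proof
            fix n assume n: "n \<in> vs P"
            then have "\<tau>2 n n = A7" by (simp add: \<tau>2_def sgx)
            then show "\<exists>e. \<tau>2 e n = A7" by blast
          qed
        qed
        have vP: "(\<lambda>e. eval add7 mul7 (\<tau>2 e) P) = (\<lambda>e. if e \<in> vs P then A7 else eval add7 mul7 \<rho> P)"
          by (auto simp: \<tau>2_def sgP)
        have vQ: "(\<lambda>e. eval add7 mul7 (\<tau>2 e) Q) = (\<lambda>e. if e \<in> vs P then A7 else eval add7 mul7 \<rho> Q)"
          by (auto simp: \<tau>2_def sgQ)
        show ?thesis
        proof (rule ccontr)
          assume ne: "eval add7 mul7 \<rho> P \<noteq> eval add7 mul7 \<rho> Q"
          show False
          proof (cases "eval add7 mul7 \<rho> P = Inf7")
            case True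
            then have "eval add7 mul7 \<rho> Q = A7" using ne qn s7_cases3 by metis
            then show False using HH True e0 unfolding vP vQ H_def by (auto split: if_splits)
          next
            case False
            then have "eval add7 mul7 \<rho> P = A7" "eval add7 mul7 \<rho> Q = Inf7"
              using ne pn qn s7_cases3 by metis+
            then show False using HH e0 unfolding vP vQ H_def by (auto split: if_splits)
          qed
        qed
      qed
    qed
  qed
qed

lemma JB_dichotomy:
  assumes "(P, Q) \<in> JB" "vs P = vs Q"
  shows "(P, Q) \<in> Th_S7 \<or> (dead P \<and> dead Q)"
proof -
  have s: "(Q, P) \<in> JB" using assms(1) unfolding JB_iff by simp
  have s7sym: "(Q, P) \<in> Th_S7 \<Longrightarrow> (P, Q) \<in> Th_S7" unfolding Th_S7_def Id_alg_iff by simp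
  show ?thesis using main_N[OF assms(1) assms(2)[symmetric]] main_N[OF s assms(2)] s7sym by blast
qed


lemma eqT_refl: "eq_theory T \<Longrightarrow> (t, t) \<in> T" unfolding eq_theory_def by blast
lemma eqT_sym: "eq_theory T \<Longrightarrow> (s, t) \<in> T \<Longrightarrow> (t, s) \<in> T" unfolding eq_theory_def by blast
lemma eqT_trans: "eq_theory T \<Longrightarrow> (s, t) \<in> T \<Longrightarrow> (t, u) \<in> T \<Longrightarrow> (s, u) \<in> T"
  unfolding eq_theory_def by blast
lemma eqT_times: "eq_theory T \<Longrightarrow> (s, t) \<in> T \<Longrightarrow> (s', t') \<in> T \<Longrightarrow> (Times s s', Times t t') \<in> T"
  unfolding eq_theory_def by blast
lemma eqT_subst: "eq_theory T \<Longrightarrow> (s, t) \<in> T \<Longrightarrow> (subst \<tau> s, subst \<tau> t) \<in> T"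
  unfolding eq_theory_def by blast

abbreviation Kl where "Kl \<equiv> Times (sq X) Y"
abbreviation Kr where "Kr \<equiv> Times (sq X) (sq Y)"

definition G :: "s7 \<Rightarrow> trm" where
  "G c = (case c of One7 \<Rightarrow> sq X | A7 \<Rightarrow> Kl | Inf7 \<Rightarrow> Kr)"

lemma mul7_sq_ne1: "x \<noteq> One7 \<Longrightarrow> mul7 x x = Inf7"
  by (cases x) auto

lemma Gsub:
  assumes r: "\<forall>n. \<rho> n \<noteq> Inf7"
  shows "(Times (sq X) (subst (\<lambda>v. if \<rho> v = A7 then Y else X) s), G (eval add7 mul7 \<rho> s)) \<in> Th_S7"
  unfolding Th_S7_def Id_alg_iff
proof
  fix \<mu> :: "nat \<Rightarrow> s7"
  let ?c = "eval add7 mul7 \<rho> s"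
  let ?in = "eval add7 mul7 (\<lambda>v. if \<rho> v = A7 then \<mu> 1 else \<mu> 0) s"
  have L: "eval add7 mul7 \<mu> (Times (sq X) (subst (\<lambda>v. if \<rho> v = A7 then Y else X) s))
      = mul7 (mul7 (\<mu> 0) (\<mu> 0)) ?in"
  proof -
    have e: "(\<lambda>n. eval add7 mul7 \<mu> ((\<lambda>v. if \<rho> v = A7 then Y else X) n)) = (\<lambda>v. if \<rho> v = A7 then \<mu> 1 else \<mu> 0)"
      by (rule ext) simp
    show ?thesis by (simp only: eval.simps eval_subst e)
  qed
  show "eval add7 mul7 \<mu> (Times (sq X) (subst (\<lambda>v. if \<rho> v = A7 then Y else X) s)) = eval add7 mul7 \<mu> (G ?c)"
    unfolding L
  proof (cases "\<mu> 0 = One7")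
    case False
    then have "mul7 (\<mu> 0) (\<mu> 0) = Inf7" by (rule mul7_sq_ne1)
    then show "mul7 (mul7 (\<mu> 0) (\<mu> 0)) ?in = eval add7 mul7 \<mu> (G ?c)"
      by (cases ?c) (simp_all add: G_def)
  next
    case T0: True
    show "mul7 (mul7 (\<mu> 0) (\<mu> 0)) ?in = eval add7 mul7 \<mu> (G ?c)"
    proof (cases "\<mu> 1")
      case One7
      then have "?in = One7" using T0 by (simp add: e7_one)
      then show ?thesis using T0 One7 by (cases ?c) (simp_all add: G_def)
    next
      case A7
      have "(\<lambda>v. if \<rho> v = A7 then \<mu> 1 else \<mu> 0) = \<rho>"
      proof
        fix v show "(if \<rho> v = A7 then \<mu> 1 else \<mu> 0) = \<rho> v"
          using r[rule_format, of v] A7 T0 by (cases "\<rho> v") auto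
      qed
      then have "?in = ?c" by simp
      then show ?thesis using T0 A7 by (cases ?c) (simp_all add: G_def)
    next
      case Inf7
      show ?thesis
      proof (cases "\<exists>n\<in>vs s. \<rho> n = A7")
        case True
        then obtain n where n: "n \<in> vs s" "\<rho> n = A7" by blast
        have "?in = Inf7" using e7_inf[of n s "\<lambda>v. if \<rho> v = A7 then \<mu> 1 else \<mu> 0"] n Inf7 by simp
        moreover have "?c \<noteq> One7" using n e7_one[of \<rho> s] by auto
        ultimately show ?thesis using T0 Inf7 by (cases ?c) (simp_all add: G_def)
      next
        case False
        then have a1: "\<forall>n\<in>vs s. \<rho> n = One7" using r by (metis s7.exhaust)
        then have "?c = One7" by (simp add: e7_one)
        moreover have "?in = One7" using a1 False T0 by (simp add: e7_one)
        ultimately show ?thesis using T0 Inf7 by (simp add: G_def)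
      qed
    qed
  qed
qed

lemma S7_eqT: "(s, t) \<in> Th_S7 \<Longrightarrow> Th_S7 \<subseteq> T \<Longrightarrow> (s, t) \<in> T" by blast

lemma KrY: "(Times Kr Y, Kr) \<in> Th_S7"
  unfolding Th_S7_def Id_alg_iff
proof
  fix \<mu> :: "nat \<Rightarrow> s7"
  show "eval add7 mul7 \<mu> (Times Kr Y) = eval add7 mul7 \<mu> Kr"
    by (cases "\<mu> 0"; cases "\<mu> 1") simp_all
qed

lemma K1:
  assumes T: "eq_theory T" "Th_S7 \<subseteq> T" and h: "(sq X, Kr) \<in> T"
  shows "(Kl, Kr) \<in> T"
proof -
  have "(Times (sq X) Y, Times Kr Y) \<in> T" by (rule eqT_times[OF T(1) h eqT_refl[OF T(1)]])
  moreover have "(Times Kr Y, Kr) \<in> T" using KrY T(2) by blast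
  ultimately show ?thesis by (rule eqT_trans[OF T(1)])
qed

lemma K2:
  assumes T: "eq_theory T" "Th_S7 \<subseteq> T" and h: "(sq X, Kl) \<in> T"
  shows "(Kl, Kr) \<in> T"
proof -
  have "(subst (\<lambda>n. if n = 1 then sq Y else V n) (sq X), subst (\<lambda>n. if n = 1 then sq Y else V n) Kl) \<in> T"
    by (rule eqT_subst[OF T(1) h])
  then have "(sq X, Kr) \<in> T" by simp
  then show ?thesis by (rule K1[OF T])
qed

lemma K_from_G:
  assumes T: "eq_theory T" "Th_S7 \<subseteq> T" and h: "(G c, G d) \<in> T" and cd: "c \<noteq> d"
  shows "(Kl, Kr) \<in> T"
proof -
  have h': "(G d, G c) \<in> T" by (rule eqT_sym[OF T(1) h])
  show ?thesis
    using cd h h' K1[OF T] K2[OF T] eqT_sym[OF T(1)]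
    by (cases c; cases d) (simp_all add: G_def)
qed

lemma get_rho:
  assumes "(s, t) \<notin> Th_S7"
  shows "\<exists>\<rho>. (\<forall>n. \<rho> n \<noteq> Inf7) \<and> eval add7 mul7 \<rho> s \<noteq> eval add7 mul7 \<rho> t"
proof -
  from assms obtain \<rho>0 where r0: "eval add7 mul7 \<rho>0 s \<noteq> eval add7 mul7 \<rho>0 t"
    unfolding Th_S7_def Id_alg_iff by blast
  show ?thesis
  proof (cases "vs s = vs t")
    case True
    have ni: "\<forall>n\<in>vs s. \<rho>0 n \<noteq> Inf7"
    proof
      fix n assume n: "n \<in> vs s"
      show "\<rho>0 n \<noteq> Inf7"
      proof
        assume "\<rho>0 n = Inf7"
        then have "eval add7 mul7 \<rho>0 s = Inf7" "eval add7 mul7 \<rho>0 t = Inf7"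
          using e7_inf[of n s \<rho>0] e7_inf[of n t \<rho>0] n True by auto
        then show False using r0 by simp
      qed
    qed
    define \<rho> where "\<rho> v = (if \<rho>0 v = Inf7 then One7 else \<rho>0 v)" for v
    have "eval add7 mul7 \<rho> s = eval add7 mul7 \<rho>0 s" by (rule eval_cong) (use ni in \<open>auto simp: \<rho>_def\<close>)
    moreover have "eval add7 mul7 \<rho> t = eval add7 mul7 \<rho>0 t" by (rule eval_cong) (use ni True in \<open>auto simp: \<rho>_def\<close>)
    moreover have "\<forall>n. \<rho> n \<noteq> Inf7" by (simp add: \<rho>_def)
    ultimately show ?thesis using r0 by metis
  next
    case False
    then obtain z where z: "(z \<in> vs s \<and> z \<notin> vs t) \<or> (z \<in> vs t \<and> z \<notin> vs s)" by blast
    define \<rho> where "\<rho> v = (if v = z then A7 else One7)" for v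
    have "(eval add7 mul7 \<rho> s = One7) \<noteq> (eval add7 mul7 \<rho> t = One7)"
      using z by (auto simp: e7_one \<rho>_def)
    moreover have "\<forall>n. \<rho> n \<noteq> Inf7" by (simp add: \<rho>_def)
    ultimately show ?thesis by metis
  qed
qed

lemma T_K:
  assumes T: "eq_theory T" "Th_S7 \<subseteq> T" and st: "(s, t) \<in> T" "(s, t) \<notin> Th_S7"
  shows "(Kl, Kr) \<in> T"
proof -
  obtain \<rho> where r: "\<forall>n. \<rho> n \<noteq> Inf7" and ne: "eval add7 mul7 \<rho> s \<noteq> eval add7 mul7 \<rho> t"
    using get_rho[OF st(2)] by blast
  let ?\<tau> = "\<lambda>v. if \<rho> v = A7 then Y else X"
  have "(Times (sq X) (subst ?\<tau> s), Times (sq X) (subst ?\<tau> t)) \<in> T"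
    by (rule eqT_times[OF T(1) eqT_refl[OF T(1)] eqT_subst[OF T(1) st(1)]])
  moreover have "(Times (sq X) (subst ?\<tau> s), G (eval add7 mul7 \<rho> s)) \<in> T" using Gsub[OF r] T(2) by blast
  moreover have "(Times (sq X) (subst ?\<tau> t), G (eval add7 mul7 \<rho> t)) \<in> T" using Gsub[OF r] T(2) by blast
  ultimately have "(G (eval add7 mul7 \<rho> s), G (eval add7 mul7 \<rho> t)) \<in> T"
    by (meson T(1) eqT_sym eqT_trans)
  then show ?thesis by (rule K_from_G[OF T _ ne])
qed

lemma dead_sq:
  assumes "x \<in> vs P" "\<forall>\<sigma>. \<sigma> x \<noteq> One7 \<longrightarrow> eval add7 mul7 \<sigma> P = Inf7"
  shows "(P, Times (sq (V x)) P) \<in> Th_S7"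
  unfolding Th_S7_def Id_alg_iff
proof
  fix \<mu> :: "nat \<Rightarrow> s7"
  show "eval add7 mul7 \<mu> P = eval add7 mul7 \<mu> (Times (sq (V x)) P)"
  proof (cases "\<mu> x = One7")
    case True then show ?thesis by simp
  next
    case False
    then show ?thesis using assms(2) mul7_sq_ne1[OF False] by simp
  qed
qed

lemma sqsq:
  assumes "x \<in> vs P"
  shows "eval add7 mul7 \<mu> (Times (sq (V x)) (sq P)) = (if \<forall>n\<in>vs P. \<mu> n = One7 then One7 else Inf7)"
proof (cases "\<forall>n\<in>vs P. \<mu> n = One7")
  case True
  then have "eval add7 mul7 \<mu> P = One7" "\<mu> x = One7" using assms by (auto simp: e7_one)
  then show ?thesis using True by simp
next
  case False
  then have "eval add7 mul7 \<mu> P \<noteq> One7" by (simp add: e7_one)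
  then have "mul7 (eval add7 mul7 \<mu> P) (eval add7 mul7 \<mu> P) = Inf7" by (rule mul7_sq_ne1)
  then show ?thesis using False by simp
qed

lemma dead_T:
  assumes T: "eq_theory T" "Th_S7 \<subseteq> T" and K: "(Kl, Kr) \<in> T"
    and dP: "dead P" and dQ: "dead Q" and vsq: "vs P = vs Q"
  shows "(P, Q) \<in> T"
proof -
  obtain x where x: "x \<in> vs P" "\<forall>\<sigma>. \<sigma> x \<noteq> One7 \<longrightarrow> eval add7 mul7 \<sigma> P = Inf7"
    using dP unfolding dead_def by blast
  obtain w where w: "w \<in> vs Q" "\<forall>\<sigma>. \<sigma> w \<noteq> One7 \<longrightarrow> eval add7 mul7 \<sigma> Q = Inf7"
    using dQ unfolding dead_def by blast
  have kx: "(Times (sq (V x)) P, Times (sq (V x)) (sq P)) \<in> T"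
    using eqT_subst[OF T(1) K, of "\<lambda>n. if n = 0 then V x else P"] by simp
  have kw: "(Times (sq (V w)) Q, Times (sq (V w)) (sq Q)) \<in> T"
    using eqT_subst[OF T(1) K, of "\<lambda>n. if n = 0 then V w else Q"] by simp
  have m: "(Times (sq (V x)) (sq P), Times (sq (V w)) (sq Q)) \<in> Th_S7"
    unfolding Th_S7_def Id_alg_iff using sqsq[OF x(1)] sqsq[OF w(1)] vsq by simp
  have p1: "(P, Times (sq (V x)) P) \<in> T" using dead_sq[OF x] T(2) by blast
  have q1: "(Q, Times (sq (V w)) Q) \<in> T" using dead_sq[OF w] T(2) by blast
  have "(P, Times (sq (V x)) (sq P)) \<in> T" by (rule eqT_trans[OF T(1) p1 kx])
  then have "(P, Times (sq (V w)) (sq Q)) \<in> T" using m T(2) eqT_trans[OF T(1)] by blast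
  moreover have "(Times (sq (V w)) (sq Q), Q) \<in> T"
    using eqT_sym[OF T(1) eqT_trans[OF T(1) q1 kw]] .
  ultimately show ?thesis by (rule eqT_trans[OF T(1)])
qed

theorem proposition3p14:
  shows "eq_theory Th_join \<and> Th_S7 \<subset> Th_join \<and>
         (\<forall>T. eq_theory T \<and> Th_S7 \<subset> T \<longrightarrow> Th_join \<subseteq> T)"
proof (intro conjI allI impI)
  have eN: "eq_theory Th_N" unfolding Th_N_def by (rule eq_theory_closure)
  have eM: "eq_theory Th_M2" unfolding Th_M2_def by (rule eq_theory_Id_alg)
  show ej: "eq_theory Th_join" unfolding Th_join_def by (rule eq_theory_Int[OF eM eN])
  have S7N: "Th_S7 \<subseteq> Th_N" unfolding Th_N_def using closure_sub by blast
  have AxN: "Ax \<in> Th_N" unfolding Th_N_def using closure_sub by blast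
  have sub: "Th_S7 \<subseteq> Th_join" unfolding Th_join_def using S7_sub_M2 S7N by blast
  let ?w = "(Plus Kl (sq X), Kl)"
  have wN: "?w \<in> Th_N"
  proof -
    have "(Plus Kl (sq X), Plus (sq X) (sq X)) \<in> Th_N"
      unfolding eq_theory_def using eN AxN unfolding eq_theory_def by blast
    moreover have "(Plus (sq X) (sq X), sq X) \<in> Th_S7"
      unfolding Th_S7_def Id_alg_iff by simp
    moreover have "(sq X, Kl) \<in> Th_N" using eqT_sym[OF eN AxN] .
    ultimately show ?thesis using S7N eqT_trans[OF eN] by blast
  qed
  have wM: "?w \<in> Th_M2"
    unfolding Th_M2_def Id_alg_iff
  proof
    fix \<mu> :: "nat \<Rightarrow> m2"
    show "eval add2 mul2 \<mu> (Plus Kl (sq X)) = eval add2 mul2 \<mu> Kl"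
      by (cases "\<mu> 0"; cases "\<mu> 1") simp_all
  qed
  have wS: "?w \<notin> Th_S7"
  proof
    assume "?w \<in> Th_S7"
    then have "eval add7 mul7 (\<lambda>n. if n = 0 then One7 else A7) (Plus Kl (sq X))
             = eval add7 mul7 (\<lambda>n. if n = 0 then One7 else A7) Kl"
      unfolding Th_S7_def Id_alg_iff by blast
    then show False by simp
  qed
  show "Th_S7 \<subset> Th_join" using sub wN wM wS unfolding Th_join_def by blast
next
  fix T assume a: "eq_theory T \<and> Th_S7 \<subset> T"
  then have T: "eq_theory T" "Th_S7 \<subseteq> T" by auto
  from a have "T - Th_S7 \<noteq> {}" by blast
  then obtain p where p: "p \<in> T" "p \<notin> Th_S7" by blast
  obtain s t where "p = (s, t)" by (cases p)
  with p have st: "(s, t) \<in> T" "(s, t) \<notin> Th_S7" by auto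
  have K: "(Kl, Kr) \<in> T" by (rule T_K[OF T st])
  show "Th_join \<subseteq> T"
  proof
    fix p assume p: "p \<in> Th_join"
    obtain P Q where pq: "p = (P, Q)" by (cases p)
    have m: "(P, Q) \<in> Th_M2" and n: "(P, Q) \<in> Th_N" using p pq unfolding Th_join_def by auto
    have vsq: "vs P = vs Q" by (rule M2_vs[OF m])
    have "(P, Q) \<in> JB" using n N_sub_JB by blast
    then have "(P, Q) \<in> Th_S7 \<or> (dead P \<and> dead Q)" by (rule JB_dichotomy[OF _ vsq])
    then have "(P, Q) \<in> T" using T dead_T[OF T K _ _ vsq] by blast
    then show "p \<in> T" using pq by simp
  qed
qed

end
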